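(* Let $A(z)=\sum_{k=0}^{\infty}a_kz^k$ with $a_0\neq 0$ and $H(z)=\sum_{k=1}^{\infty}h_kz^k$ with $h_1\neq 0$ be analytic in a disk $|z|<R$ with $R>1$, with real coefficients. Let the Sheffer polynomials $p_k$ be defined by $A(t)e^{xH(t)}=\sum_{k=0}^{\infty}p_k(x)t^k$ for $|t|<R$, and assume $p_k(x)\ge 0$ for all $x\ge 0$ and all $k$, $A(1)\neq 0$ and $H'(1)=1$. Let $(b_n)$ be a positive increasing sequence with $b_n\to\infty$ and $b_n/n\to 0$, and define $$T_n^*(f;x)=\frac{e^{-\frac{n}{b_n}xH(1)}}{A(1)}\sum_{k=0}^{\infty}p_k\Big(\frac{n}{b_n}x\Big)f\Big(\frac{k}{n}b_n\Big).$$ Let $\rho(x)=1+x^2$. Then there is a constant $M>0$, independent of $n$, such that $\|T_n^*(\rho;\cdot)\|_{\rho}\le 1+M$ for all $n$.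
   Context: For a function $g$ on $[0,\infty)$, $\|g\|_\rho=\sup_{x\ge 0}\frac{|g(x)|}{\rho(x)}$. *)

theory Defs
  imports "HOL-Analysis.Analysis"
begin

definition pser :: "(nat \<Rightarrow> real) \<Rightarrow> real \<Rightarrow> real" where
  "pser c t = (\<Sum>k. c k * t ^ k)"

definition rho :: "real \<Rightarrow> real" where
  "rho x = 1 + x ^ 2"

text \<open>Weighted norm ||g||_rho = sup over x >= 0 of |g x| / rho x (in the extended reals,
  so that an unbounded quotient gives infinity).\<close>
definition rho_norm :: "(real \<Rightarrow> real) \<Rightarrow> ereal" where
  "rho_norm g = (SUP x\<in>{0..}. ereal (\<bar>g x\<bar> / rho x))"

definition Tstar :: "(nat \<Rightarrow> real) \<Rightarrow> (nat \<Rightarrow> real) \<Rightarrow> (nat \<Rightarrow> real \<Rightarrow> real) \<Rightarrow> (nat \<Rightarrow> real)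
    \<Rightarrow> nat \<Rightarrow> (real \<Rightarrow> real) \<Rightarrow> real \<Rightarrow> real" where
  "Tstar a h p b n f x =
     exp (- (real n / b n) * x * pser h 1) / pser a 1 *
     (\<Sum>k. p k (real n / b n * x) * f (real k / real n * b n))"

end

theory Submission
  imports Defs
begin

lemma real_summ:
  assumes "\<forall>z::complex. norm z < R \<longrightarrow> summable (\<lambda>k. complex_of_real (a k) * z ^ k)"
  shows "\<forall>t::real. \<bar>t\<bar> < R \<longrightarrow> summable (\<lambda>k. a k * t ^ k)"
proof (intro allI impI)
  fix t :: real assume "\<bar>t\<bar> < R"
  then have "summable (\<lambda>k. complex_of_real (a k) * (of_real t) ^ k)" using assms by auto
  then have "summable (\<lambda>k. complex_of_real (a k * t ^ k))" by simp
  then show "summable (\<lambda>k. a k * t ^ k)" by (simp only: summable_of_real_iff)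
qed

lemma diffs_summ:
  assumes "\<forall>t::real. \<bar>t\<bar> < R \<longrightarrow> summable (\<lambda>k. c k * t ^ k)"
  shows "\<forall>t::real. \<bar>t\<bar> < R \<longrightarrow> summable (\<lambda>k. diffs c k * t ^ k)"
  using assms by (auto intro!: termdiff_converges[where K=R])

lemma pser_deriv:
  assumes "\<forall>t::real. \<bar>t\<bar> < R \<longrightarrow> summable (\<lambda>k. c k * t ^ k)" "\<bar>t\<bar> < R"
  shows "(pser c has_real_derivative pser (diffs c) t) (at t)"
  unfolding pser_def[abs_def] using assms
  by (intro termdiffs_strong'[where K=R]) auto

lemma deriv_transfer:
  assumes "(f has_real_derivative D) (at t)" "(g has_real_derivative E) (at t)"
    "\<bar>t\<bar> < R" "\<And>s. \<bar>s\<bar> < R \<Longrightarrow> f s = g s"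
  shows "D = E"
proof -
  have "(g has_real_derivative D) (at t)"
    by (rule has_field_derivative_transform_within_open[OF assms(1), of "{-R<..<R}"])
      (use assms in auto)
  then show ?thesis using assms(2) by (rule DERIV_unique)
qed

lemma moments:
  assumes "\<forall>t::real. \<bar>t\<bar> < R \<longrightarrow> summable (\<lambda>k. c k * t ^ k)" "R > 1"
  shows "c sums pser c 1"
    "(\<lambda>k. real k * c k) sums pser (diffs c) 1"
    "(\<lambda>k. real k ^ 2 * c k) sums (pser (diffs (diffs c)) 1 + pser (diffs c) 1)"
proof -
  have s0: "summable (\<lambda>k. c k * 1 ^ k)" using assms by (metis abs_one)
  then show "c sums pser c 1" unfolding pser_def by (simp add: summable_sums)
  have d1: "\<forall>t::real. \<bar>t\<bar> < R \<longrightarrow> summable (\<lambda>k. diffs c k * t ^ k)"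
    by (rule diffs_summ[OF assms(1)])
  have d2: "\<forall>t::real. \<bar>t\<bar> < R \<longrightarrow> summable (\<lambda>k. diffs (diffs c) k * t ^ k)"
    by (rule diffs_summ[OF d1])
  have "(\<lambda>k. diffs c k) sums pser (diffs c) 1"
    using d1[rule_format, of 1] assms(2) unfolding pser_def by (auto intro!: summable_sums)
  then have "(\<lambda>n. real (Suc n) * c (Suc n)) sums pser (diffs c) 1"
    by (simp add: diffs_def)
  then have S1: "(\<lambda>k. real k * c k) sums pser (diffs c) 1"
    by (subst (asm) sums_Suc_iff) simp
  then show "(\<lambda>k. real k * c k) sums pser (diffs c) 1" .
  have "(\<lambda>k. diffs (diffs c) k) sums pser (diffs (diffs c)) 1"
    using d2[rule_format, of 1] assms(2) unfolding pser_def by (auto intro!: summable_sums)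
  then have "(\<lambda>n. real (Suc n) * diffs c (Suc n)) sums pser (diffs (diffs c)) 1"
    by (simp add: diffs_def)
  then have "(\<lambda>n. real n * diffs c n) sums pser (diffs (diffs c)) 1"
    by (subst (asm) sums_Suc_iff) simp
  then have "(\<lambda>n. real (Suc n) * (real (Suc n) - 1) * c (Suc n)) sums pser (diffs (diffs c)) 1"
    by (simp add: diffs_def mult.assoc mult.commute mult.left_commute)
  then have S2: "(\<lambda>k. real k * (real k - 1) * c k) sums pser (diffs (diffs c)) 1"
    by (subst (asm) sums_Suc_iff) simp
  have "(\<lambda>k. real k * (real k - 1) * c k + real k * c k) sums (pser (diffs (diffs c)) 1 + pser (diffs c) 1)"
    by (rule sums_add[OF S2 S1])
  then show "(\<lambda>k. real k ^ 2 * c k) sums (pser (diffs (diffs c)) 1 + pser (diffs c) 1)"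
    by (simp add: algebra_simps power2_eq_square)
qed

lemma F_deriv:
  assumes sa: "\<forall>t::real. \<bar>t\<bar> < R \<longrightarrow> summable (\<lambda>k. a k * t ^ k)"
    and sh: "\<forall>t::real. \<bar>t\<bar> < R \<longrightarrow> summable (\<lambda>k. h k * t ^ k)"
    and t: "\<bar>t\<bar> < R"
  shows "((\<lambda>s. pser a s * exp (u * pser h s)) has_real_derivative
     (pser (diffs a) t * exp (u * pser h t) + u * pser a t * pser (diffs h) t * exp (u * pser h t))) (at t)"
proof -
  have dA: "(pser a has_real_derivative pser (diffs a) t) (at t)" by (rule pser_deriv[OF sa t])
  have dH: "(pser h has_real_derivative pser (diffs h) t) (at t)" by (rule pser_deriv[OF sh t])
  show ?thesis
    by (rule derivative_eq_intros dA dH refl | simp add: algebra_simps)+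
qed

lemma G_vals:
  assumes sa: "\<forall>t::real. \<bar>t\<bar> < R \<longrightarrow> summable (\<lambda>k. a k * t ^ k)"
    and sh: "\<forall>t::real. \<bar>t\<bar> < R \<longrightarrow> summable (\<lambda>k. h k * t ^ k)"
    and sc: "\<forall>t::real. \<bar>t\<bar> < R \<longrightarrow> (\<lambda>k. c k * t ^ k) sums (pser a t * exp (u * pser h t))"
    and R: "R > 1"
    and H1: "pser (diffs h) 1 = 1"
  shows "pser c 1 = pser a 1 * exp (u * pser h 1)"
    "pser (diffs c) 1 = (pser (diffs a) 1 + u * pser a 1) * exp (u * pser h 1)"
    "pser (diffs (diffs c)) 1 = (pser (diffs (diffs a)) 1 + 2 * u * pser (diffs a) 1
        + u * pser a 1 * pser (diffs (diffs h)) 1 + u ^ 2 * pser a 1) * exp (u * pser h 1)"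
proof -
  have eq: "pser c t = pser a t * exp (u * pser h t)" if "\<bar>t\<bar> < R" for t
    using sc that unfolding pser_def by (auto simp: sums_iff)
  then show "pser c 1 = pser a 1 * exp (u * pser h 1)" using R by simp
  have scs: "\<forall>t::real. \<bar>t\<bar> < R \<longrightarrow> summable (\<lambda>k. c k * t ^ k)"
    using sc by (auto simp: sums_iff)
  have eq1: "pser (diffs c) t = pser (diffs a) t * exp (u * pser h t) + u * pser a t * pser (diffs h) t * exp (u * pser h t)"
    if t: "\<bar>t\<bar> < R" for t
    by (rule deriv_transfer[OF pser_deriv[OF scs t] F_deriv[OF sa sh t] t eq])
  then show "pser (diffs c) 1 = (pser (diffs a) 1 + u * pser a 1) * exp (u * pser h 1)"
    using R H1 by (simp add: algebra_simps)
  have sa1: "\<forall>t::real. \<bar>t\<bar> < R \<longrightarrow> summable (\<lambda>k. diffs a k * t ^ k)" by (rule diffs_summ[OF sa])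
  have sh1: "\<forall>t::real. \<bar>t\<bar> < R \<longrightarrow> summable (\<lambda>k. diffs h k * t ^ k)" by (rule diffs_summ[OF sh])
  have sc1: "\<forall>t::real. \<bar>t\<bar> < R \<longrightarrow> summable (\<lambda>k. diffs c k * t ^ k)" by (rule diffs_summ[OF scs])
  have t1: "\<bar>1::real\<bar> < R" using R by simp
  have dA: "(pser a has_real_derivative pser (diffs a) 1) (at 1)" by (rule pser_deriv[OF sa t1])
  have dH: "(pser h has_real_derivative pser (diffs h) 1) (at 1)" by (rule pser_deriv[OF sh t1])
  have dA1: "(pser (diffs a) has_real_derivative pser (diffs (diffs a)) 1) (at 1)" by (rule pser_deriv[OF sa1 t1])
  have dH1: "(pser (diffs h) has_real_derivative pser (diffs (diffs h)) 1) (at 1)" by (rule pser_deriv[OF sh1 t1])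
  have dF: "((\<lambda>t. pser (diffs a) t * exp (u * pser h t) + u * pser a t * pser (diffs h) t * exp (u * pser h t))
     has_real_derivative
     (pser (diffs (diffs a)) 1 * exp (u * pser h 1) + pser (diffs a) 1 * (exp (u * pser h 1) * (u * pser (diffs h) 1))
      + (u * pser (diffs a) 1 * pser (diffs h) 1 * exp (u * pser h 1)
         + u * pser a 1 * pser (diffs (diffs h)) 1 * exp (u * pser h 1)
         + u * pser a 1 * pser (diffs h) 1 * (exp (u * pser h 1) * (u * pser (diffs h) 1))))) (at 1)"
    by (rule derivative_eq_intros dA dH dA1 dH1 refl | simp add: algebra_simps)+
  have "pser (diffs (diffs c)) 1 = 
     (pser (diffs (diffs a)) 1 * exp (u * pser h 1) + pser (diffs a) 1 * (exp (u * pser h 1) * (u * pser (diffs h) 1))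
      + (u * pser (diffs a) 1 * pser (diffs h) 1 * exp (u * pser h 1)
         + u * pser a 1 * pser (diffs (diffs h)) 1 * exp (u * pser h 1)
         + u * pser a 1 * pser (diffs h) 1 * (exp (u * pser h 1) * (u * pser (diffs h) 1))))"
    by (rule deriv_transfer[OF pser_deriv[OF sc1 t1] dF t1 eq1])
  then show "pser (diffs (diffs c)) 1 = (pser (diffs (diffs a)) 1 + 2 * u * pser (diffs a) 1
        + u * pser a 1 * pser (diffs (diffs h)) 1 + u ^ 2 * pser a 1) * exp (u * pser h 1)"
    using H1 by (simp add: algebra_simps power2_eq_square)
qed

theorem lemma3p3:
  fixes a h :: "nat \<Rightarrow> real" and p :: "nat \<Rightarrow> real \<Rightarrow> real"
    and b :: "nat \<Rightarrow> real" and R :: real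
  assumes R: "R > 1"
    and A_conv: "\<forall>z::complex. norm z < R \<longrightarrow> summable (\<lambda>k. complex_of_real (a k) * z ^ k)"
    and H_conv: "\<forall>z::complex. norm z < R \<longrightarrow> summable (\<lambda>k. complex_of_real (h k) * z ^ k)"
    and a0: "a 0 \<noteq> 0"
    and h0: "h 0 = 0"
    and h1: "h 1 \<noteq> 0"
    and sheffer: "\<forall>x t. \<bar>t\<bar> < R \<longrightarrow> (\<lambda>k. p k x * t ^ k) sums (pser a t * exp (x * pser h t))"
    and p_nonneg: "\<forall>k x. x \<ge> 0 \<longrightarrow> p k x \<ge> 0"
    and A1: "pser a 1 \<noteq> 0"
    and H'1: "(pser h has_real_derivative 1) (at 1)"
    and b_pos: "\<forall>n. b n > 0"
    and b_inc: "incseq b"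
    and b_inf: "filterlim b at_top sequentially"
    and b_sub: "(\<lambda>n. b n / real n) \<longlonglongrightarrow> 0"
  shows "\<exists>M>0. \<forall>n\<ge>1. rho_norm (Tstar a h p b n rho) \<le> ereal (1 + M)"
proof -
  have sa: "\<forall>t::real. \<bar>t\<bar> < R \<longrightarrow> summable (\<lambda>k. a k * t ^ k)" by (rule real_summ[OF A_conv])
  have sh: "\<forall>t::real. \<bar>t\<bar> < R \<longrightarrow> summable (\<lambda>k. h k * t ^ k)" by (rule real_summ[OF H_conv])
  have t1: "\<bar>1::real\<bar> < R" using R by simp
  have H1: "pser (diffs h) 1 = 1"
    using DERIV_unique[OF pser_deriv[OF sh t1] H'1] .
  define \<alpha> where "\<alpha> = pser a 1"
  define \<alpha>1 where "\<alpha>1 = pser (diffs a) 1"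
  define \<alpha>2 where "\<alpha>2 = pser (diffs (diffs a)) 1"
  define \<eta>2 where "\<eta>2 = pser (diffs (diffs h)) 1"
  define C0 where "C0 = (\<alpha>2 + \<alpha>1) / \<alpha>"
  define C1 where "C1 = (2 * \<alpha>1 + \<alpha> + \<alpha> * \<eta>2) / \<alpha>"
  have "convergent (\<lambda>n. b n / real n)" using b_sub by (auto simp: convergent_def)
  then have "Bseq (\<lambda>n. b n / real n)" by (rule convergent_imp_Bseq)
  then obtain B where B: "B > 0" "\<And>n. norm (b n / real n) \<le> B" by (auto elim: BseqE)
  define M where "M = 1 + B^2 * \<bar>C0\<bar> + B * \<bar>C1\<bar>"
  have Mpos: "M > 0" unfolding M_def using B by (simp add: add_pos_nonneg)
  have main: "\<bar>Tstar a h p b n rho x\<bar> / rho x \<le> 1 + M" if n: "n \<ge> 1" and x: "x \<ge> 0" for n x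
  proof -
    define s where "s = b n / real n"
    define u where "u = real n / b n * x"
    have spos: "s > 0" using b_pos n unfolding s_def by auto
    have sB: "s \<le> B" using B(2)[of n] spos b_pos unfolding s_def by (simp add: less_imp_le)
    have us: "u = x / s" unfolding u_def s_def by simp
    define c where "c = (\<lambda>k. p k u)"
    have sc: "\<forall>t::real. \<bar>t\<bar> < R \<longrightarrow> (\<lambda>k. c k * t ^ k) sums (pser a t * exp (u * pser h t))"
      using sheffer unfolding c_def by auto
    have scs: "\<forall>t::real. \<bar>t\<bar> < R \<longrightarrow> summable (\<lambda>k. c k * t ^ k)"
      using sc by (auto simp: sums_iff)
    note mom = moments[OF scs R]
    note gv = G_vals[OF sa sh sc R H1]
    define E where "E = exp (u * pser h 1)"
    have S0: "c sums (\<alpha> * E)" using mom(1) gv(1) unfolding \<alpha>_def E_def by simp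
    have S2: "(\<lambda>k. real k ^ 2 * c k) sums ((\<alpha>2 + \<alpha>1 + u * (2 * \<alpha>1 + \<alpha> + \<alpha> * \<eta>2) + u^2 * \<alpha>) * E)"
      using mom(3) gv(2,3) unfolding \<alpha>_def \<alpha>1_def \<alpha>2_def \<eta>2_def E_def by (simp add: algebra_simps)
    have "(\<lambda>k. c k + s^2 * (real k ^ 2 * c k)) sums (\<alpha> * E + s^2 * ((\<alpha>2 + \<alpha>1 + u * (2 * \<alpha>1 + \<alpha> + \<alpha> * \<eta>2) + u^2 * \<alpha>) * E))"
      by (intro sums_add S0 sums_mult S2)
    moreover have "(\<lambda>k. p k (real n / b n * x) * rho (real k / real n * b n)) = (\<lambda>k. c k + s^2 * (real k ^ 2 * c k))"
      unfolding c_def u_def s_def rho_def by (auto simp: algebra_simps power2_eq_square)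
    ultimately have sum: "(\<Sum>k. p k (real n / b n * x) * rho (real k / real n * b n)) = \<alpha> * E + s^2 * ((\<alpha>2 + \<alpha>1 + u * (2 * \<alpha>1 + \<alpha> + \<alpha> * \<eta>2) + u^2 * \<alpha>) * E)"
      by (simp add: sums_iff)
    have ex: "exp (- (real n / b n) * x * pser h 1) * E = 1"
      unfolding E_def u_def by (simp add: exp_minus field_simps)
    have "Tstar a h p b n rho x = exp (- (real n / b n) * x * pser h 1) * E / \<alpha> * (\<alpha> + s^2 * (\<alpha>2 + \<alpha>1 + u * (2 * \<alpha>1 + \<alpha> + \<alpha> * \<eta>2) + u^2 * \<alpha>))"
      unfolding Tstar_def sum \<alpha>_def[symmetric] by (simp add: algebra_simps)
    also have "\<dots> = 1 + s^2 * C0 + s * x * C1 + x^2"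
      unfolding ex C0_def C1_def us using A1 spos unfolding \<alpha>_def[symmetric]
      by (simp add: field_simps power2_eq_square)
    finally have T: "Tstar a h p b n rho x = 1 + s^2 * C0 + s * x * C1 + x^2" .
    have r: "rho x = 1 + x^2" by (simp add: rho_def)
    have rpos: "rho x > 0" by (simp add: rho_def add_pos_nonneg)
    have "\<bar>Tstar a h p b n rho x\<bar> \<le> (1 + x^2) + B^2 * \<bar>C0\<bar> + B * x * \<bar>C1\<bar>"
    proof -
      have "\<bar>s^2 * C0\<bar> \<le> B^2 * \<bar>C0\<bar>" using spos sB
        by (simp add: abs_mult mult_right_mono power_mono)
      moreover have "\<bar>s * x * C1\<bar> \<le> B * x * \<bar>C1\<bar>" using spos sB x
        by (simp add: abs_mult mult_right_mono)
      moreover have "\<bar>1 + s^2 * C0 + s * x * C1 + x^2\<bar> \<le> (1 + x^2) + \<bar>s^2 * C0\<bar> + \<bar>s * x * C1\<bar>"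
      proof -
        have e: "1 + s^2 * C0 + s * x * C1 + x^2 = (1 + x^2) + s^2 * C0 + s * x * C1" by simp
        have "\<bar>1 + x^2\<bar> = 1 + x^2" by (simp add: add_nonneg_nonneg)
        then show ?thesis unfolding e
          using abs_triangle_ineq[of "1 + x^2 + s^2 * C0" "s * x * C1"] abs_triangle_ineq[of "1 + x^2" "s^2 * C0"]
          by linarith
      qed
      ultimately show ?thesis unfolding T by linarith
    qed
    also have "\<dots> \<le> (1 + M) * (1 + x^2)"
    proof -
      have "0 \<le> (x - 1)^2" by simp
      then have "x \<le> 1 + x^2" using x unfolding power2_diff by simp
      then have "x * (B * \<bar>C1\<bar>) \<le> (1 + x^2) * (B * \<bar>C1\<bar>)" using B
        by (intro mult_right_mono) auto
      then have "B * x * \<bar>C1\<bar> \<le> B * \<bar>C1\<bar> * (1 + x^2)"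
        by (simp only: ac_simps)
      moreover have "B^2 * \<bar>C0\<bar> * 1 \<le> B^2 * \<bar>C0\<bar> * (1 + x^2)"
        by (intro mult_left_mono) auto
      moreover have "(1+M)*(1+x^2) = (1+x^2) + B^2*\<bar>C0\<bar>*(1+x^2) + B*\<bar>C1\<bar>*(1+x^2) + (1+x^2)"
        by (simp add: M_def algebra_simps)
      moreover have "0 \<le> x^2" by simp
      ultimately show ?thesis by linarith
    qed
    finally show ?thesis using rpos r by (simp add: divide_le_eq)
  qed
  show ?thesis
  proof (intro exI[of _ M] conjI allI impI Mpos)
    fix n :: nat assume "n \<ge> 1"
    then show "rho_norm (Tstar a h p b n rho) \<le> ereal (1 + M)"
      unfolding rho_norm_def using main by (auto intro!: SUP_least)
  qed
qed

end
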